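(* Let $a\in\mathbb{C}$ with $|a-\tfrac14|\le\tfrac14$, $a\neq0$, and $\varphi(z)=az^2+(1-2a)z+a$. Then: (i) if $|a-\tfrac14|<\tfrac14$, $\varphi$ is essentially linear fractional (with $\eta=\zeta=1$); (ii) if $|a-\tfrac14|=\tfrac14$ and $a\neq\tfrac12$, then $\varphi$ is not essentially linear fractional, but $\varphi\circ\varphi$ is essentially linear fractional; (iii) if $a=\tfrac12$, i.e. $\varphi(z)=\tfrac12z^2+\tfrac12$, then no iterate $\varphi_n$ ($n\ge1$) is essentially linear fractional.
   Context: An analytic self-map $\varphi$ of the open unit disk $\mathbb{D}$ is called essentially linear fractional if (1) $\varphi(\mathbb{D})$ is contained in a proper subdisk of $\mathbb{D}$ internally tangent to the unit circle at some point $\eta\in\partial\mathbb{D}$; (2) the set $\varphi^{-1}(\{\eta\}):=\{\gamma\in\partial\mathbb{D}:\eta \text{ belongs to the cluster set of } \varphi \text{ at } \gamma\}$ consists of exactly one point $\zeta\in\partial\mathbb{D}$; and (3) $\varphi'''$ extends continuously to $\mathbb{D}\cup\{\zeta\}$. (For $\varphi$ analytic on a neighborhood of $\overline{\mathbb{D}}$, the cluster-set condition in (2) just means $\varphi(\gamma)=\eta$.) $\varphi_n$ denotes the $n$-th iterate of $\varphi$. *)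

theory Defs
  imports "HOL-Analysis.Analysis"
begin

definition cluster_set :: "(complex \<Rightarrow> complex) \<Rightarrow> complex \<Rightarrow> complex set" where
  "cluster_set f \<gamma> = {w. \<forall>\<delta>>0. w \<in> closure (f ` (ball 0 1 \<inter> ball \<gamma> \<delta>))}"

definition bdry_preimage :: "(complex \<Rightarrow> complex) \<Rightarrow> complex \<Rightarrow> complex set" where
  "bdry_preimage f \<eta> = {\<gamma>. norm \<gamma> = 1 \<and> \<eta> \<in> cluster_set f \<gamma>}"

text \<open>Essentially linear fractional, with the tangency point eta and the unique boundary
  preimage zeta made explicit.  The subdisk internally tangent to the unit circle at eta
  with radius r (0<r<1) is the open disk centred at (1-r)eta of radius r.\<close>
definition ELF_at :: "(complex \<Rightarrow> complex) \<Rightarrow> complex \<Rightarrow> complex \<Rightarrow> bool" where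
  "ELF_at f \<eta> \<zeta> \<longleftrightarrow>
     f holomorphic_on ball 0 1 \<and> f ` ball 0 1 \<subseteq> ball 0 1 \<and>
     norm \<eta> = 1 \<and>
     (\<exists>r. 0 < r \<and> r < 1 \<and> f ` ball 0 1 \<subseteq> ball (complex_of_real (1 - r) * \<eta>) r) \<and>
     bdry_preimage f \<eta> = {\<zeta>} \<and>
     (\<exists>g. continuous_on (ball 0 1 \<union> {\<zeta>}) g \<and> (\<forall>z\<in>ball 0 1. g z = (deriv ^^ 3) f z))"

definition ess_lin_frac :: "(complex \<Rightarrow> complex) \<Rightarrow> bool" where
  "ess_lin_frac f \<longleftrightarrow> (\<exists>\<eta> \<zeta>. ELF_at f \<eta> \<zeta>)"

end

theory Submission
  imports Defs "HOL-Complex_Analysis.Complex_Analysis"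
begin


lemma cluster_cont:
  assumes cf: "continuous_on UNIV f" and g: "norm \<gamma> = 1"
  shows "cluster_set f \<gamma> = {f \<gamma>}"
proof
  show "{f \<gamma>} \<subseteq> cluster_set f \<gamma>"
  proof (clarsimp simp: cluster_set_def)
    fix d :: real assume d: "d > 0"
    have "\<gamma> \<in> ball \<gamma> d \<inter> closure (ball 0 1)" using d g by simp
    then have "\<gamma> \<in> closure (ball \<gamma> d \<inter> ball 0 1)"
      using open_Int_closure_subset[of "ball \<gamma> d" "ball 0 1"] by auto
    then have "\<gamma> \<in> closure (ball 0 1 \<inter> ball \<gamma> d)" by (simp add: Int_commute)
    moreover have "f ` closure (ball 0 1 \<inter> ball \<gamma> d) \<subseteq> closure (f ` (ball 0 1 \<inter> ball \<gamma> d))"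
      by (rule image_closure_subset) (auto intro: continuous_on_subset[OF cf] closure_subset[THEN subsetD])
    ultimately show "f \<gamma> \<in> closure (f ` (ball 0 1 \<inter> ball \<gamma> d))" by auto
  qed
  show "cluster_set f \<gamma> \<subseteq> {f \<gamma>}"
  proof
    fix w assume w: "w \<in> cluster_set f \<gamma>"
    show "w \<in> {f \<gamma>}"
    proof (rule ccontr)
      assume "w \<notin> {f \<gamma>}"
      then have e: "dist w (f \<gamma>) / 2 > 0" by simp
      from cf have "isCont f \<gamma>" by (simp add: continuous_on_eq_continuous_at)
      then obtain d where d: "d > 0" "\<And>z. dist z \<gamma> < d \<Longrightarrow> dist (f z) (f \<gamma>) < dist w (f \<gamma>) / 2"
        using e unfolding continuous_at_eps_delta by blast
      have "f ` (ball 0 1 \<inter> ball \<gamma> d) \<subseteq> cball (f \<gamma>) (dist w (f \<gamma>) / 2)"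
        using d by (auto simp: dist_commute less_imp_le)
      then have "closure (f ` (ball 0 1 \<inter> ball \<gamma> d)) \<subseteq> cball (f \<gamma>) (dist w (f \<gamma>) / 2)"
        by (simp add: closure_minimal)
      moreover have "w \<in> closure (f ` (ball 0 1 \<inter> ball \<gamma> d))" using w d unfolding cluster_set_def by auto
      ultimately have "dist (f \<gamma>) w \<le> dist w (f \<gamma>) / 2" by auto
      then show False using e by (simp add: dist_commute)
    qed
  qed
qed

lemma bdry_cont:
  assumes "continuous_on UNIV f"
  shows "bdry_preimage f \<eta> = {\<gamma>. norm \<gamma> = 1 \<and> f \<gamma> = \<eta>}"
  using cluster_cont[OF assms] unfolding bdry_preimage_def by auto

lemma tangent_eta:
  assumes cf: "continuous_on UNIV f" and p: "norm p = 1" and fp: "f p = 1"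
    and eta: "norm \<eta> = 1" and r: "0 < r" "r < 1"
    and sub: "f ` ball 0 1 \<subseteq> ball (complex_of_real (1 - r) * \<eta>) r"
  shows "\<eta> = 1"
proof -
  have "f ` closure (ball 0 1) \<subseteq> cball (complex_of_real (1 - r) * \<eta>) r"
    by (rule image_closure_subset) (use sub in \<open>auto intro: continuous_on_subset[OF cf]\<close>)
  moreover have "p \<in> closure (ball 0 1)" using p by simp
  ultimately have "f p \<in> cball (complex_of_real (1 - r) * \<eta>) r" by blast
  then have h: "cmod (1 - complex_of_real (1 - r) * \<eta>) \<le> r" using fp by (simp add: dist_norm norm_minus_commute)
  have e2: "(Re \<eta>)^2 + (Im \<eta>)^2 = 1" using eta by (simp add: cmod_def)
  have "(cmod (1 - complex_of_real (1 - r) * \<eta>))^2 = (1 - (1-r) * Re \<eta>)^2 + ((1-r) * Im \<eta>)^2"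
    by (simp add: cmod_def)
  also have "\<dots> = 1 - 2*(1-r)*Re \<eta> + (1-r)^2 * ((Re \<eta>)^2 + (Im \<eta>)^2)" by (simp add: power2_eq_square algebra_simps)
  also have "\<dots> = 1 - 2*(1-r)*Re \<eta> + (1-r)^2" using e2 by simp
  finally have "1 - 2*(1-r)*Re \<eta> + (1-r)^2 \<le> r^2"
    using h by (metis norm_ge_zero power_mono)
  then have "(1-r) * (2 - 2 * Re \<eta>) \<le> 0" by (simp add: power2_eq_square algebra_simps)
  then have "Re \<eta> \<ge> 1" using r by (simp add: mult_le_0_iff)
  moreover have "Re \<eta> \<le> 1" using eta complex_Re_le_cmod by (metis)
  ultimately have "Re \<eta> = 1" by simp
  then have "Im \<eta> = 0" using e2 by simp
  then show ?thesis using \<open>Re \<eta> = 1\<close> by (simp add: complex_eq_iff)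
qed

lemma deriv3_cont:
  assumes "f holomorphic_on UNIV"
  shows "\<exists>g. continuous_on S g \<and> (\<forall>z\<in>ball 0 1. g z = (deriv ^^ 3) f z)"
proof -
  have "\<And>n. (deriv ^^ n) f holomorphic_on UNIV"
  proof -
    fix n show "(deriv ^^ n) f holomorphic_on UNIV"
      by (induction n) (auto intro: holomorphic_deriv assms)
  qed
  then show ?thesis
    by (metis holomorphic_on_imp_continuous_on continuous_on_subset subset_UNIV)
qed

lemma disk_crit:
  fixes u :: complex and r :: real
  assumes "u \<noteq> 0" "r > 0"
  shows "1 + u \<in> ball (complex_of_real (1 - r) * 1) r \<longleftrightarrow> Re (1/u) < -1/(2*r)"
proof -
  have n: "(Re u)^2 + (Im u)^2 > 0" using assms(1)
    by (metis complex_eq_iff sum_power2_gt_zero_iff zero_complex.simps)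
  have "1 + u \<in> ball (complex_of_real (1 - r) * 1) r \<longleftrightarrow> sqrt ((Re u + r)^2 + (Im u)^2) < sqrt (r^2)"
    using assms(2) by (simp add: dist_norm cmod_def algebra_simps power2_commute[of "- Re u" r] power2_minus)
  also have "\<dots> \<longleftrightarrow> (Re u + r)^2 + (Im u)^2 < r^2" by (rule real_sqrt_less_iff)
  also have "\<dots> \<longleftrightarrow> (Re u)^2 + (Im u)^2 + 2*r*Re u < 0" by (simp add: power2_eq_square algebra_simps)
  also have "\<dots> \<longleftrightarrow> Re u / ((Re u)^2 + (Im u)^2) < -1/(2*r)"
    using n assms(2) by (simp add: field_simps, arith)
  also have "Re u / ((Re u)^2 + (Im u)^2) = Re (1/u)" by (simp add: Re_divide power2_eq_square)
  finally show ?thesis .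
qed



lemma core_id:
  fixes a W :: complex
  assumes V: "W + a \<noteq> 0"
  defines "x \<equiv> - Re (W + a)" and "y \<equiv> Im (W + a)"
  shows "-(Re (W^2/(W+a)) + 1/2) * (x^2+y^2) =
     (x - (1/2 - Re a)) * (x^2+y^2+Re a * x + (Re a)^2) + Re a * (y - Im a)^2
     + (Re a + x) * ((1/2 - Re a) * Re a - (Im a)^2)"
proof -
  have n: "x^2 + y^2 \<noteq> 0" using V unfolding x_def y_def
    by (metis complex_eq_iff sum_power2_eq_zero_iff zero_complex.simps neg_equal_0_iff_equal power2_minus)
  have "Re (W^2/(W+a)) = (Re (W^2) * Re (W+a) + Im (W^2) * Im (W+a)) / (x^2+y^2)"
    by (simp add: Re_divide x_def y_def power2_eq_square) (simp add: algebra_simps)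
  also have "Re (W^2) = (-x - Re a)^2 - (y - Im a)^2" by (simp add: x_def y_def power2_eq_square)
  also have "Im (W^2) = 2 * (-x - Re a) * (y - Im a)" by (simp add: x_def y_def power2_eq_square)
  also have "Re (W + a) = -x" by (simp add: x_def)
  also have "Im (W + a) = y" by (simp add: y_def)
  finally have e: "Re (W^2/(W+a)) = (((-x - Re a)^2 - (y - Im a)^2) * (-x) + 2 * (-x - Re a) * (y - Im a) * y) / (x^2+y^2)" .
  have m: "Re (W^2/(W+a)) * (x^2+y^2) = (((-x - Re a)^2 - (y - Im a)^2) * (-x) + 2 * (-x - Re a) * (y - Im a) * y)"
    unfolding e using n by simp
  have "-(Re (W^2/(W+a)) + 1/2) * (x^2+y^2) = - (Re (W^2/(W+a)) * (x^2+y^2)) - (x^2+y^2)/2"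
    by (simp add: algebra_simps)
  also have "\<dots> = - (((-x - Re a)^2 - (y - Im a)^2) * (-x) + 2 * (-x - Re a) * (y - Im a) * y) - (x^2+y^2)/2"
    by (simp add: m)
  also have "\<dots> = (x - (1/2 - Re a)) * (x^2+y^2+Re a * x + (Re a)^2) + Re a * (y - Im a)^2
     + (Re a + x) * ((1/2 - Re a) * Re a - (Im a)^2)"
    by (simp add: power2_eq_square algebra_simps add_divide_distrib)
  finally show ?thesis .
qed


lemma W_main:
  fixes a W :: complex
  assumes al: "Re a > 0" "Re a < 1/2" and e: "(1/2 - Re a)*Re a - (Im a)^2 \<ge> 0"
    and W: "Re W < -1/2"
  shows "W + a \<noteq> 0"
    and "(-(Re (W^2/(W+a)) + 1/2)) * ((Re (W+a))^2 + (Im (W+a))^2) \<ge>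
         (- Re (W+a) - (1/2 - Re a)) * ((Re (W+a))^2 + (Im (W+a))^2) + Re a * (Im (W+a) - Im a)^2"
    and "-(Re (W^2/(W+a)) + 1/2) \<ge> - Re (W+a) - (1/2 - Re a)"
    and "- Re (W+a) - (1/2 - Re a) > 0"
proof -
  define x where "x = - Re (W + a)"
  define y where "y = Im (W + a)"
  have xs: "x > 1/2 - Re a" using W al unfolding x_def by simp
  then have x0: "x > 0" using al by simp
  show V: "W + a \<noteq> 0" proof assume "W + a = 0" then show False using x0 unfolding x_def by simp qed
  have Q: "x^2 + y^2 > 0" using x0 by (simp add: add_pos_nonneg)
  have id: "-(Re (W^2/(W+a)) + 1/2) * (x^2+y^2) =
     (x - (1/2 - Re a)) * (x^2+y^2+Re a * x + (Re a)^2) + Re a * (y - Im a)^2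
     + (Re a + x) * ((1/2 - Re a) * Re a - (Im a)^2)"
    using core_id[OF V] unfolding x_def y_def by simp
  have t1: "(x - (1/2 - Re a)) * (Re a * x + (Re a)^2) \<ge> 0" using xs x0 al by simp
  have t2: "(Re a + x) * ((1/2 - Re a) * Re a - (Im a)^2) \<ge> 0" using e x0 al by simp
  have main: "(-(Re (W^2/(W+a)) + 1/2)) * (x^2+y^2) \<ge> (x - (1/2 - Re a)) * (x^2+y^2) + Re a * (y - Im a)^2"
  proof -
    have "(x - (1/2 - Re a)) * (x^2+y^2+Re a * x + (Re a)^2) + Re a * (y - Im a)^2
     + (Re a + x) * ((1/2 - Re a) * Re a - (Im a)^2) = (x - (1/2 - Re a)) * (x^2+y^2) + Re a * (y - Im a)^2
     + (x - (1/2 - Re a)) * (Re a * x + (Re a)^2) + (Re a + x) * ((1/2 - Re a) * Re a - (Im a)^2)"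
      by (simp add: algebra_simps)
    then show ?thesis unfolding id using t1 t2 by linarith
  qed
  moreover have "x^2 = (Re (W+a))^2" unfolding x_def by (simp add: power2_eq_square algebra_simps)
  ultimately show "(-(Re (W^2/(W+a)) + 1/2)) * ((Re (W+a))^2 + (Im (W+a))^2) \<ge>
         (- Re (W+a) - (1/2 - Re a)) * ((Re (W+a))^2 + (Im (W+a))^2) + Re a * (Im (W+a) - Im a)^2"
    unfolding y_def by (simp only: x_def)
  have "(-(Re (W^2/(W+a)) + 1/2)) * (x^2+y^2) \<ge> (x - (1/2 - Re a)) * (x^2+y^2)"
    using main al by (smt (verit) mult_nonneg_nonneg zero_le_power2)
  then show "-(Re (W^2/(W+a)) + 1/2) \<ge> - Re (W+a) - (1/2 - Re a)"
    using Q unfolding x_def by (simp add: mult_le_cancel_right)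
  show "- Re (W+a) - (1/2 - Re a) > 0" using xs unfolding x_def by simp
qed

lemma phi_W:
  fixes a z :: complex
  assumes al: "Re a > 0" "Re a < 1/2" and e: "(1/2 - Re a)*Re a - (Im a)^2 \<ge> 0"
    and z: "z \<in> ball 0 1"
  shows "Re (1/(z-1)) < -1/2"
    and "a * z^2 + (1 - 2*a) * z + a - 1 \<noteq> 0"
    and "1 / (a * z^2 + (1 - 2*a) * z + a - 1) = (1/(z-1))^2 / (1/(z-1) + a)"
proof -
  have z1: "z - 1 \<noteq> 0" using z by auto
  have "1 + (z - 1) \<in> ball (complex_of_real (1 - 1) * 1) 1" using z by simp
  then show W: "Re (1/(z-1)) < -1/2" using disk_crit[OF z1, of 1] by simp
  define W where "W = 1/(z-1)"
  have V: "W + a \<noteq> 0" using W_main(1)[OF al e] W unfolding W_def by blast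
  have zW: "z = 1 + 1/W" using z1 unfolding W_def by simp
  have W0: "W \<noteq> 0" using z1 unfolding W_def by simp
  have eq: "a * z^2 + (1 - 2*a) * z + a - 1 = (W + a) / W^2"
    unfolding zW using W0 by (simp add: field_simps power2_eq_square)
  show "a * z^2 + (1 - 2*a) * z + a - 1 \<noteq> 0" unfolding eq using V W0 by simp
  show "1 / (a * z^2 + (1 - 2*a) * z + a - 1) = (1/(z-1))^2 / (1/(z-1) + a)"
    unfolding eq W_def[symmetric] by simp
qed

lemma W_to_z:
  fixes W :: complex
  assumes "Re W < -1/2"
  shows "1 + 1/W \<in> ball 0 1" and "1/((1 + 1/W) - 1) = W"
proof -
  have W0: "W \<noteq> 0" using assms by auto
  have "Re (1/(1/W)) < -1/(2*1)" using assms by simp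
  then have "1 + 1/W \<in> ball (complex_of_real (1 - 1) * 1) 1"
    using disk_crit[of "1/W" 1] W0 by simp
  then show "1 + 1/W \<in> ball 0 1" by simp
  show "1/((1 + 1/W) - 1) = W" by simp
qed



lemma real_i:
  fixes sv al ev x y bv :: real
  assumes sv: "sv > 0" and al: "al > 0" and ev: "ev > 0" and x: "x > sv"
  defines "k \<equiv> min sv (min (al/2) (sv*ev/(4* sv^2+2*bv^2)))"
  shows "k * (x^2+y^2) \<le> (x-sv)*(x^2+y^2+al*x+al^2) + al*(y-bv)^2 + (al+x)*ev"
proof -
  have k1: "k \<le> sv" unfolding k_def by simp
  have k2: "k \<le> al/2" unfolding k_def by (meson min.cobounded1 min.cobounded2 order_trans)
  have k3: "k \<le> sv*ev/(4* sv^2+2*bv^2)" unfolding k_def by (meson min.cobounded2 order_trans)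
  have k0: "k > 0" unfolding k_def using sv al ev by (simp add: add_pos_nonneg)
  have R0: "(x-sv)*(al*x+al^2) \<ge> 0" "al*(y-bv)^2 \<ge> 0" "(al+x)*ev \<ge> 0" using x sv al ev by auto
  show ?thesis
  proof (cases "x \<ge> 2* sv")
    case True
    have "k * (x^2+y^2) \<le> sv * (x^2+y^2)" using k1 by (simp add: mult_right_mono)
    also have "\<dots> \<le> (x-sv) * (x^2+y^2)" using True by (simp add: mult_right_mono)
    finally show ?thesis using R0 by (simp add: algebra_simps)
  next
    case False
    have D: "4* sv^2+2*bv^2 > 0" using sv by (simp add: add_pos_nonneg)
    have k3': "k*(4* sv^2+2*bv^2) \<le> sv*ev" using k3 D by (simp add: pos_le_divide_eq)
    have "x^2 \<le> (2 * sv)^2" using False x sv by (intro power_mono) auto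
    then have "x^2 \<le> 4* sv^2" by (simp add: power_mult_distrib)
    have "2*(y-bv)^2 + 2*bv^2 - y^2 = (y-2*bv)^2" by (simp add: power2_eq_square algebra_simps)
    then have "y^2 \<le> 2*(y-bv)^2 + 2*bv^2" by (metis diff_ge_0_iff_ge zero_le_power2)
    have "k*(x^2+y^2) \<le> k*(4* sv^2 + 2*(y-bv)^2 + 2*bv^2)"
      using \<open>x^2 \<le> 4* sv^2\<close> \<open>y^2 \<le> 2*(y-bv)^2 + 2*bv^2\<close> k0 by (simp add: mult_left_mono)
    also have "\<dots> = k*(4* sv^2+2*bv^2) + 2*k*(y-bv)^2" by (simp add: algebra_simps)
    also have "\<dots> \<le> sv*ev + al*(y-bv)^2" using k3' k2 by (intro add_mono mult_right_mono) auto
    also have "sv*ev \<le> (al+x)*ev" using x al ev by (simp add: mult_right_mono)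
    finally have "k*(x^2+y^2) \<le> (al+x)*ev + al*(y-bv)^2" by simp
    moreover have "(x-sv)*(x^2+y^2+al*x+al^2) \<ge> 0" using x sv al by (simp add: add_pos_nonneg)
    ultimately show ?thesis by linarith
  qed
qed

lemma case_i_bound:
  fixes a :: complex
  assumes al: "Re a > 0" "Re a < 1/2" and e: "(1/2 - Re a)*Re a - (Im a)^2 > 0"
  shows "\<exists>k>0. \<forall>W. Re W < -1/2 \<longrightarrow> Re (W^2/(W+a)) \<le> -1/2 - k"
proof -
  define s where "s = 1/2 - Re a"
  define ee where "ee = (1/2 - Re a)*Re a - (Im a)^2"
  define k where "k = min s (min (Re a/2) (s * ee/(4* s^2+2*(Im a)^2)))"
  have s0: "s > 0" using al unfolding s_def by simp
  have e0: "ee > 0" using e unfolding ee_def by simp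
  have k0: "k > 0" unfolding k_def using s0 al e0 by (simp add: add_pos_nonneg)
  have "Re (W^2/(W+a)) \<le> -1/2 - k" if W: "Re W < -1/2" for W
  proof -
    have V: "W + a \<noteq> 0" using W_main(1)[OF al _ W] e by simp
    define x where "x = - Re (W + a)"
    define y where "y = Im (W + a)"
    have xs: "x > s" using W unfolding x_def s_def by simp
    have Q: "x^2+y^2 > 0" using xs s0 by (simp add: add_pos_nonneg)
    have "k*(x^2+y^2) \<le> (x-s)*(x^2+y^2+Re a*x+(Re a)^2) + Re a*(y-Im a)^2 + (Re a+x)*ee"
      unfolding k_def by (rule real_i[OF s0 al(1) e0 xs])
    also have "\<dots> = -(Re (W^2/(W+a)) + 1/2) * (x^2+y^2)"
      using core_id[OF V] unfolding x_def y_def s_def ee_def by simp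
    finally have "k \<le> -(Re (W^2/(W+a)) + 1/2)" using Q by (simp add: mult_le_cancel_right)
    then show ?thesis by simp
  qed
  then show ?thesis using k0 by blast
qed



lemma real_ii_close:
  fixes t dd d0 al s x y b rho K :: real
  assumes t: "t > 0" "t \<le> dd" and dd: "dd < d0" and d0: "d0 \<le> 1" "d0 \<le> al/4" "d0 \<le> rho^2/(2*(1+K/al))"
    and al: "al > 0" and s: "s > 0" and x: "x = s + t" and yb: "al*(y-b)^2 \<le> dd*(x^2+y^2)"
    and K: "K = 2*(s+1)^2 + 4*b^2"
  shows "t^2 + (y-b)^2 < rho^2"
proof -
  have dd0: "dd > 0" using t by simp
  have x1: "x \<le> s + 1" "x > 0" using x t dd d0 s by auto
  have Q0: "x^2+y^2 \<ge> 0" by simp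
  have yb1: "(y-b)^2 \<le> dd*(x^2+y^2)/al" using yb al by (simp add: pos_le_divide_eq mult.commute)
  have "dd*(x^2+y^2)/al \<le> (al/4)*(x^2+y^2)/al"
    using dd d0 al Q0 by (intro divide_right_mono mult_right_mono) auto
  also have "\<dots> = (x^2+y^2)/4" using al by simp
  finally have yb2: "(y-b)^2 \<le> (x^2+y^2)/4" using yb1 by linarith
  have "2*(y-b)^2 + 2*b^2 - y^2 = (y-2*b)^2" by (simp add: power2_eq_square algebra_simps)
  then have "y^2 \<le> 2*(y-b)^2 + 2*b^2" by (metis diff_ge_0_iff_ge zero_le_power2)
  moreover have "4*(y-b)^2 \<le> x^2+y^2" using yb2 by simp
  ultimately have y2: "y^2 \<le> x^2 + 4*b^2" by linarith
  have "x^2 \<le> (s+1)^2" using x1 by (intro power_mono) auto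
  then have QK: "x^2+y^2 \<le> K" using y2 K by linarith
  have "(y-b)^2 \<le> dd*K/al" using yb1 QK dd0 al
    by (smt (verit) divide_right_mono mult_left_mono)
  moreover have "t^2 \<le> dd" proof -
    have "t^2 \<le> dd^2" using t by (intro power_mono) auto
    also have "\<dots> \<le> dd" using dd0 dd d0 by (simp add: power2_eq_square mult_le_cancel_left1)
    finally show ?thesis .
  qed
  ultimately have "t^2 + (y-b)^2 \<le> dd*(1 + K/al)" by (simp add: algebra_simps)
  also have "\<dots> < rho^2" proof -
    have K0: "K/al \<ge> 0" using K al by simp
    have "dd*(1 + K/al) < d0*(1+K/al)" using dd K0 by (simp add: mult_strict_right_mono add_pos_nonneg)
    also have "\<dots> \<le> rho^2/2" proof -
      have p: "2*(1+K/al) > 0" using K0 by simp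
      have "d0 * (2*(1+K/al)) \<le> rho^2" using d0(3) p by (simp add: le_divide_eq)
      then show ?thesis by (simp add: algebra_simps)
    qed
    also have "\<dots> \<le> rho^2" by simp
    finally show ?thesis .
  qed
  finally show ?thesis .
qed



lemma h_id: fixes W a :: complex shows "W + a \<noteq> 0 \<Longrightarrow> W^2/(W+a) + a = (W+a) - a + a^2/(W+a)"
  by (simp add: field_simps power2_eq_square)

lemma gstar:
  fixes a :: complex
  assumes s: "1/2 - Re a > 0" and e: "(1/2 - Re a)*Re a - (Im a)^2 = 0"
  shows "Im (Complex (-(1/2 - Re a)) (Im a) - a + a^2 / Complex (-(1/2 - Re a)) (Im a)) - Im a
          = - Im a / (2*(1/2 - Re a))"
proof -
  define s where "s = 1/2 - Re a"
  define al where "al = Re a"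
  define b where "b = Im a"
  have a: "a = Complex al b" unfolding al_def b_def by simp
  have bb: "b^2 = s*al" using e unfolding s_def al_def b_def by simp
  have s0: "s > 0" using s unfolding s_def by simp
  have n: "s^2 + b^2 = s/2" using bb unfolding s_def al_def by (simp add: power2_eq_square algebra_simps)
  have "Im (Complex (-s) b - a + a^2 / Complex (-s) b) - b
     = (- (al^2 - b^2) * b - 2*al*b * s) / (s^2 + b^2) - b"
    unfolding a by (simp add: Im_divide power2_eq_square algebra_simps)
  also have "\<dots> = - b / (2 * s)" unfolding n using s0 bb
    by (simp add: field_simps power2_eq_square) (simp add: s_def al_def algebra_simps)
  finally show ?thesis unfolding s_def b_def al_def by simp
qed



lemma case_ii_bound:
  fixes a :: complex
  assumes al: "Re a > 0" "Re a < 1/2" and e: "(1/2 - Re a)*Re a - (Im a)^2 = 0" and b0: "Im a \<noteq> 0"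
  shows "\<exists>k>0. \<forall>W. Re W < -1/2 \<longrightarrow> Re ((W^2/(W+a))^2/((W^2/(W+a))+a)) \<le> -1/2 - k"
proof -
  define s where "s = 1/2 - Re a"
  define b where "b = Im a"
  define h where "h = (\<lambda>V::complex. V - a + a^2/V)"
  define Vs where "Vs = Complex (-s) b"
  define g where "g = Im (h Vs) - b"
  have s0: "s > 0" using al unfolding s_def by simp
  have e': "(1/2 - Re a)*Re a - (Im a)^2 \<ge> 0" using e by simp
  have gv: "g = - b/(2 * s)" using gstar[of a] al e unfolding g_def h_def Vs_def s_def b_def by simp
  have g0: "\<bar>g\<bar> > 0" using gv b0 s0 unfolding b_def by simp
  have Vs0: "Vs \<noteq> 0" using s0 unfolding Vs_def by (auto simp: complex_eq_iff)
  have "isCont h Vs" unfolding h_def using Vs0 by (intro continuous_intros) auto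
  then obtain rho where rho: "rho > 0" "\<And>V. dist V Vs < rho \<Longrightarrow> dist (h V) (h Vs) < min (\<bar>g\<bar>/2) 1"
    using g0 unfolding continuous_at_eps_delta by (metis min_less_iff_conj zero_less_divide_iff zero_less_numeral zero_less_one)
  define C where "C = cmod (h Vs) + 1"
  define K where "K = 2*(s+1)^2 + 4*b^2"
  define d0 where "d0 = min 1 (min (Re a/4) (rho^2/(2*(1+K/Re a))))"
  define k2 where "k2 = Re a * (g/2)^2 / C^2"
  define k where "k = min d0 k2"
  have C0: "C > 0" unfolding C_def by (simp add: add_nonneg_pos)
  have K0: "K \<ge> 0" unfolding K_def by simp
  have d00: "d0 > 0" unfolding d0_def using al rho K0 by (simp add: add_pos_nonneg)
  have k20: "k2 > 0" unfolding k2_def using al g0 C0 by simp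
  have k0: "k > 0" unfolding k_def using d00 k20 by simp
  have main: "Re ((W^2/(W+a))^2/((W^2/(W+a))+a)) \<le> -1/2 - k" if W: "Re W < -1/2" for W
  proof -
    define W' where "W' = W^2/(W+a)"
    define dd where "dd = -(Re W' + 1/2)"
    define dd' where "dd' = -(Re (W'^2/(W'+a)) + 1/2)"
    define V where "V = W + a"
    define V' where "V' = W' + a"
    define t where "t = - Re V - s"
    define Q where "Q = (Re V)^2 + (Im V)^2"
    define Q' where "Q' = (Re V')^2 + (Im V')^2"
    have V0: "V \<noteq> 0" using W_main(1)[OF al e' W] unfolding V_def .
    have m2: "dd * Q \<ge> t * Q + Re a * (Im V - Im a)^2"
      using W_main(2)[OF al e' W] unfolding dd_def W'_def Q_def t_def V_def s_def by simp
    have m3: "dd \<ge> t" using W_main(3)[OF al e' W] unfolding dd_def W'_def t_def V_def s_def by simp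
    have t0: "t > 0" using W_main(4)[OF al e' W] unfolding t_def V_def s_def by simp
    have W'h: "Re W' < -1/2" using m3 t0 unfolding dd_def by simp
    have m2': "dd' * Q' \<ge> (- Re V' - s) * Q' + Re a * (Im V' - Im a)^2"
      using W_main(2)[OF al e' W'h] unfolding dd'_def Q'_def V'_def s_def by simp
    have m3': "dd' \<ge> - Re V' - s" using W_main(3)[OF al e' W'h] unfolding dd'_def V'_def s_def by simp
    have tV': "- Re V' - s = dd" unfolding V'_def dd_def s_def by simp
    have V'h: "V' = h V" unfolding V'_def W'_def h_def V_def using h_id V0 unfolding V_def by blast
    show ?thesis
    proof (cases "dd \<ge> d0")
      case True
      then have "dd' \<ge> k" using m3' tV' unfolding k_def by linarith
      then show ?thesis unfolding dd'_def W'_def by simp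
    next
      case False
      have "t^2 + (Im V - b)^2 < rho^2"
      proof (rule real_ii_close[OF t0 m3 _ _ _ _ al(1) s0 _ _ K_def])
        show "dd < d0" using False by simp
        show "d0 \<le> 1" unfolding d0_def by simp
        show "d0 \<le> Re a / 4" unfolding d0_def by (meson min.cobounded1 min.cobounded2 order_trans)
        show "d0 \<le> rho^2/(2*(1+K/Re a))" unfolding d0_def by (meson min.cobounded2 order_trans)
        show "- Re V = s + t" unfolding t_def by simp
        have "Re a * (Im V - b)^2 \<le> dd * Q" using m2 t0 unfolding Q_def b_def
          by (smt (verit) mult_nonneg_nonneg zero_le_power2)
        then show "Re a * (Im V - b)^2 \<le> dd * ((- Re V)^2 + (Im V)^2)" unfolding Q_def by simp
      qed
      then have "sqrt (t^2 + (Im V - b)^2) < sqrt (rho^2)" by (rule real_sqrt_less_mono)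
      moreover have "dist V Vs = sqrt (t^2 + (Im V - b)^2)"
        unfolding dist_norm Vs_def t_def cmod_def by (simp add: power2_eq_square algebra_simps)
      ultimately have "dist V Vs < rho" using rho(1) by simp
      then have hc: "dist (h V) (h Vs) < min (\<bar>g\<bar>/2) 1" using rho(2) by blast
      have "\<bar>Im (h V) - Im (h Vs)\<bar> \<le> dist (h V) (h Vs)"
        unfolding dist_norm by (metis abs_Im_le_cmod minus_complex.simps(2))
      then have "\<bar>Im (h V) - Im (h Vs)\<bar> < \<bar>g\<bar>/2" using hc by simp
      then have gy: "\<bar>Im V' - b\<bar> \<ge> \<bar>g\<bar>/2" unfolding V'h g_def by argo
      have "cmod (h V) \<le> cmod (h Vs) + dist (h V) (h Vs)"
        by (metis dist_norm norm_triangle_sub)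
      then have "cmod V' \<le> C" using hc unfolding V'h C_def by simp
      then have QC: "Q' \<le> C^2" unfolding Q'_def
        by (metis cmod_power2 norm_ge_zero power_mono)
      have Q'0: "Q' > 0" using QC unfolding Q'_def
        by (smt (verit) V'h W'h V'_def W_main(1)[OF al e' W'h] complex_eq_iff sum_power2_gt_zero_iff zero_complex.simps)
      have "(g/2)^2 \<le> (Im V' - b)^2" using gy
        by (metis abs_le_square_iff abs_divide abs_numeral power2_abs)
      then have "Re a * (g/2)^2 \<le> Re a * (Im V' - Im a)^2" using al unfolding b_def by simp
      also have "\<dots> \<le> dd' * Q'" using m2' tV' t0 m3 Q'0 by (smt (verit) mult_pos_pos)
      finally have "Re a * (g/2)^2 / C^2 \<le> dd' * Q' / C^2" using C0 by (simp add: divide_right_mono)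
      also have "\<dots> \<le> dd'" proof -
        have dd'0: "dd' \<ge> 0" using m3' tV' t0 m3 by linarith
        have "dd' * Q' \<le> dd' * C^2" using QC dd'0 by (simp add: mult_left_mono)
        then show ?thesis using C0 by (simp add: divide_le_eq)
      qed
      finally have "dd' \<ge> k" unfolding k_def k2_def by linarith
      then show ?thesis unfolding dd'_def W'_def by simp
    qed
  qed
  show ?thesis using k0 main by blast
qed



lemma case_ii_points:
  fixes a :: complex
  assumes al: "Re a > 0" "Re a < 1/2" and e: "(1/2 - Re a)*Re a - (Im a)^2 = 0" and c: "c > 0"
  shows "\<exists>W. Re W < -1/2 \<and> Re (W^2/(W+a)) \<ge> -1/2 - c"
proof -
  define s where "s = 1/2 - Re a"
  define M where "M = 1 + (Re a*(s+1) + (Re a)^2)/s^2"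
  define t where "t = min 1 (c/M)"
  define W where "W = Complex (-(s+t)) (Im a) - a"
  have s0: "s > 0" using al unfolding s_def by simp
  have M0: "M > 0" unfolding M_def using al s0 by (simp add: add_pos_nonneg)
  have t0: "t > 0" "t \<le> 1" "t \<le> c/M" unfolding t_def using c M0 by auto
  have V: "W + a = Complex (-(s+t)) (Im a)" unfolding W_def by simp
  have Wr: "Re W < -1/2" unfolding W_def s_def using t0 by simp
  have V0: "W + a \<noteq> 0" using V s0 t0 by (auto simp: complex_eq_iff)
  define x where "x = s + t"
  define Q where "Q = x^2 + (Im a)^2"
  have x: "x > s" "x \<le> s + 1" using t0 unfolding x_def by auto
  have Qs: "Q \<ge> s^2" unfolding Q_def using x s0
    by (smt (verit) power_mono zero_le_power2)
  have Q0: "Q > 0" using Qs s0 by (smt (verit) zero_less_power)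
  have id: "-(Re (W^2/(W+a)) + 1/2) * Q = t * (Q + Re a * x + (Re a)^2)"
  proof -
    have xr: "- Re (W + a) = x" and yr: "Im (W + a) = Im a" unfolding V x_def by simp_all
    have "x - (1/2 - Re a) = t" unfolding x_def s_def by simp
    then show ?thesis using core_id[OF V0, of] e unfolding xr yr Q_def by simp
  qed
  then have D: "-(Re (W^2/(W+a)) + 1/2) = t * (1 + (Re a * x + (Re a)^2)/Q)"
    using Q0 by (simp add: field_simps)
  have "(Re a * x + (Re a)^2)/Q \<le> (Re a*(s+1) + (Re a)^2)/s^2"
  proof -
    have "(Re a * x + (Re a)^2)/Q \<le> (Re a*(s+1) + (Re a)^2)/Q"
      using x al Q0 by (intro divide_right_mono) auto
    also have "\<dots> \<le> (Re a*(s+1) + (Re a)^2)/s^2"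
      using Qs s0 al Q0 by (intro divide_left_mono) (auto simp: add_pos_nonneg)
    finally show ?thesis .
  qed
  then have "-(Re (W^2/(W+a)) + 1/2) \<le> t * M" unfolding D M_def using t0
    by (intro mult_left_mono) auto
  also have "t * M \<le> c" using t0 M0 by (simp add: le_divide_eq)
  finally show ?thesis using Wr by (intro exI[of _ W]) simp
qed



lemma phi_one:
  fixes a w :: complex
  assumes "Re a < 1/2" "a \<noteq> 0" "norm w \<le> 1" "a * w^2 + (1 - 2*a) * w + a = 1"
  shows "w = 1"
proof (rule ccontr)
  assume w1: "w \<noteq> 1"
  have "a * w^2 + (1 - 2*a) * w + a - 1 = (w - 1) * (1 + a*(w-1))" by (simp add: algebra_simps power2_eq_square)
  then have "(w - 1) * (1 + a*(w-1)) = 0" using assms(4) by simp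
  then have h: "1 + a*(w-1) = 0" using w1 by simp
  have "a * w = (1 + a*(w-1)) + a - 1" by (simp add: algebra_simps)
  then have "a * w = a - 1" using h by simp
  then have "norm a * norm w = norm (a - 1)" by (metis norm_mult)
  then have "norm (a - 1) \<le> norm a" using assms(3) by (metis mult_left_le norm_ge_zero)
  then have "(norm (a - 1))^2 \<le> (norm a)^2" by (simp add: power_mono)
  then have "(Re a - 1)^2 + (Im a)^2 \<le> (Re a)^2 + (Im a)^2" by (simp add: cmod_power2)
  then show False using assms(1) by (simp add: power2_eq_square algebra_simps)
qed

lemma phi_ball:
  fixes a z :: complex
  assumes al: "Re a > 0" "Re a < 1/2" and e: "(1/2 - Re a)*Re a - (Im a)^2 \<ge> 0"
    and z: "z \<in> ball 0 1"
  shows "a * z^2 + (1 - 2*a) * z + a \<in> ball 0 1"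
    and "1 / ((a * z^2 + (1 - 2*a) * z + a) - 1) = (1/(z-1))^2 / (1/(z-1) + a)"
proof -
  have W: "Re (1/(z-1)) < -1/2" by (rule phi_W(1)[OF al e z])
  have u0: "a * z^2 + (1 - 2*a) * z + a - 1 \<noteq> 0" by (rule phi_W(2)[OF al e z])
  show eq: "1 / ((a * z^2 + (1 - 2*a) * z + a) - 1) = (1/(z-1))^2 / (1/(z-1) + a)" by (rule phi_W(3)[OF al e z])
  have "- Re (1/(z-1) + a) - (1/2 - Re a) > 0" by (rule W_main(4)[OF al e W])
  then have "Re (1 / ((a * z^2 + (1 - 2*a) * z + a) - 1)) < -1/(2*1)"
    using W_main(3)[OF al e W] unfolding eq by simp
  then have "1 + ((a * z^2 + (1 - 2*a) * z + a) - 1) \<in> ball (complex_of_real (1 - 1) * 1) 1"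
    using disk_crit[OF u0, of 1] by simp
  then show "a * z^2 + (1 - 2*a) * z + a \<in> ball 0 1" by (simp add: algebra_simps)
qed

lemma ball_sub: "0 < r \<Longrightarrow> r < 1 \<Longrightarrow> ball (complex_of_real (1 - r) * 1) r \<subseteq> ball 0 1"
proof
  fix w assume r: "0 < r" "r < 1" and w: "w \<in> ball (complex_of_real (1 - r) * 1) r"
  have "norm w \<le> norm (w - complex_of_real (1 - r)) + norm (complex_of_real (1 - r))"
    using norm_triangle_ineq[of "w - complex_of_real (1 - r)" "complex_of_real (1 - r)"] by simp
  also have "norm (w - complex_of_real (1 - r)) < r" using w by (simp add: dist_norm norm_minus_commute)
  also have "norm (complex_of_real (1 - r)) = 1 - r" using r by (simp only: norm_of_real)
  finally show "w \<in> ball 0 1" by simp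
qed



theorem mainTheorem5:
  fixes a :: complex and \<phi> :: "complex \<Rightarrow> complex"
  assumes "norm (a - 1/4) \<le> 1/4" and "a \<noteq> 0"
    and "\<phi> = (\<lambda>z. a * z^2 + (1 - 2*a) * z + a)"
  shows "(norm (a - 1/4) < 1/4 \<longrightarrow> ELF_at \<phi> 1 1)
       \<and> (norm (a - 1/4) = 1/4 \<and> a \<noteq> 1/2 \<longrightarrow>
            \<not> ess_lin_frac \<phi> \<and> ess_lin_frac (\<phi> \<circ> \<phi>))
       \<and> (a = 1/2 \<longrightarrow> (\<forall>n\<ge>1. \<not> ess_lin_frac (\<phi> ^^ n)))"
proof -
  note phi = assms(3)
  define ee where "ee = (1/2 - Re a)*Re a - (Im a)^2"
  have eeq: "ee = 1/16 - (norm (a - 1/4))^2"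
  proof -
    have "(norm (a - 1/4))^2 = (Re a - 1/4)^2 + (Im a)^2" by (simp add: cmod_power2)
    then show ?thesis unfolding ee_def by (simp add: power2_eq_square algebra_simps)
  qed
  have ee0: "ee \<ge> 0"
  proof -
    have "(norm (a - 1/4))^2 \<le> (1/4)^2" using assms(1) by (intro power_mono) auto
    then show ?thesis unfolding eeq by (simp add: power2_eq_square)
  qed
  have ib: "(Im a)^2 \<le> (1/2 - Re a)*Re a" using ee0 unfolding ee_def by simp
  have al0: "Re a > 0"
  proof (rule ccontr)
    assume "\<not> Re a > 0"
    then have "(1/2 - Re a)*Re a \<le> 0" by (simp add: mult_nonneg_nonpos)
    then have "(Im a)^2 = 0" "(1/2 - Re a)*Re a = 0" using ib zero_le_power2[of "Im a"] by linarith+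
    then have "Im a = 0" "Re a = 0" using \<open>\<not> Re a > 0\<close> by auto
    then show False using \<open>Im a = 0\<close> assms(2) by (simp add: complex_eq_iff)
  qed
  have half: "Re a < 1/2" if "a \<noteq> 1/2" "ee > 0 \<or> ee = 0"
  proof (rule ccontr)
    assume "\<not> Re a < 1/2"
    then have "(1/2 - Re a)*Re a \<le> 0" using al0 by (simp add: mult_nonpos_nonneg)
    then have "(Im a)^2 = 0" "(1/2 - Re a)*Re a = 0" using ib zero_le_power2[of "Im a"] by linarith+
    then have "Im a = 0" "Re a = 1/2" using al0 by auto
    then show False using \<open>Im a = 0\<close> that(1) by (simp add: complex_eq_iff)
  qed
  have contphi: "continuous_on UNIV \<phi>" unfolding phi by (intro continuous_intros)
  have holphi: "\<phi> holomorphic_on UNIV" unfolding phi by (intro holomorphic_intros)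
  have phi1: "\<phi> 1 = 1" unfolding phi by simp
  have preim: "\<gamma> = 1" if "Re a < 1/2" "norm \<gamma> \<le> 1" "\<phi> \<gamma> = 1" for \<gamma>
    using phi_one[OF that(1) assms(2) that(2)] that(3) unfolding phi by simp
  have mapsto: "\<phi> z \<in> ball 0 1" "1 / (\<phi> z - 1) = (1/(z-1))^2 / (1/(z-1) + a)"
    if "Re a < 1/2" "z \<in> ball 0 1" for z
    using phi_ball[OF al0 that(1) _ that(2)] ee0 unfolding phi ee_def by auto
  have P1: "ELF_at \<phi> 1 1" if lt: "norm (a - 1/4) < 1/4"
  proof -
    have eep: "ee > 0" unfolding eeq using lt
    proof -
      have "(norm (a - 1/4))^2 < (1/4)^2" using lt by (intro power_strict_mono) auto
      then show "1/16 - (norm (a - 1/4))^2 > 0" by (simp add: power2_eq_square)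
    qed
    have "a \<noteq> 1/2" proof assume h: "a = 1/2"
      have "Re a = Re (1/2)" "Im a = Im (1/2)" using h by (rule arg_cong)+
      then have r1: "Re a = 1/2" and i1: "Im a = 0" by simp_all
      have "ee = 0" unfolding ee_def r1 i1 by simp
      then show False using eep by simp qed
    then have al1: "Re a < 1/2" using half eep by blast
    obtain k where k: "k > 0" "\<And>W. Re W < -1/2 \<Longrightarrow> Re (W^2/(W+a)) \<le> -1/2 - k"
      using case_i_bound[OF al0 al1] eep unfolding ee_def by blast
    define r where "r = 1/(1+k)"
    have r: "0 < r" "r < 1" unfolding r_def using k by auto
    have sub: "\<phi> ` ball 0 1 \<subseteq> ball (complex_of_real (1 - r) * 1) r"
    proof clarify
      fix z :: complex assume z: "z \<in> ball 0 1"
      have W: "Re (1/(z-1)) < -1/2" using phi_W(1)[OF al0 al1 _ z] ee0 unfolding ee_def by simp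
      have u0: "\<phi> z - 1 \<noteq> 0" using phi_W(2)[OF al0 al1 _ z] ee0 unfolding ee_def phi by simp
      have "Re (1/(\<phi> z - 1)) \<le> -1/2 - k" using mapsto(2)[OF al1 z] k(2)[OF W] by simp
      also have "\<dots> < -1/(2*r)" unfolding r_def using k by (simp add: field_simps)
      finally have "1 + (\<phi> z - 1) \<in> ball (complex_of_real (1 - r) * 1) r"
        using disk_crit[OF u0 r(1)] by simp
      then show "\<phi> z \<in> ball (complex_of_real (1 - r) * 1) r" by simp
    qed
    have "bdry_preimage \<phi> 1 = {1}"
      unfolding bdry_cont[OF contphi] using preim[OF al1] phi1 by fastforce
    moreover have "\<phi> ` ball 0 1 \<subseteq> ball 0 1" using sub ball_sub[OF r] by blast
    ultimately show ?thesis unfolding ELF_at_def using holphi sub r deriv3_cont[OF holphi]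
      by (auto intro!: exI[of _ r])
  qed
  have P2: "\<not> ess_lin_frac \<phi> \<and> ess_lin_frac (\<phi> \<circ> \<phi>)" if eq: "norm (a - 1/4) = 1/4" and ah: "a \<noteq> 1/2"
  proof
    have ee00: "ee = 0" unfolding eeq eq by (simp add: power2_eq_square)
    have al1: "Re a < 1/2" using half[OF ah] ee00 by simp
    have b0: "Im a \<noteq> 0"
    proof
      assume "Im a = 0"
      then have "(1/2 - Re a)*Re a = 0" using ee00 unfolding ee_def by simp
      then show False using al0 al1 by simp
    qed
    show "\<not> ess_lin_frac \<phi>"
    proof
      assume "ess_lin_frac \<phi>"
      then obtain \<eta> \<zeta> where E: "ELF_at \<phi> \<eta> \<zeta>" unfolding ess_lin_frac_def by blast
      then obtain r where r: "0 < r" "r < 1" and sub: "\<phi> ` ball 0 1 \<subseteq> ball (complex_of_real (1 - r) * \<eta>) r"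
        and eta: "norm \<eta> = 1" unfolding ELF_at_def by blast
      have "\<eta> = 1" by (rule tangent_eta[OF contphi _ phi1 eta r sub]) simp
      then have sub: "\<phi> ` ball 0 1 \<subseteq> ball (complex_of_real (1 - r) * 1) r" using sub by simp
      define c where "c = (1/r - 1)/2"
      have c0: "c > 0" unfolding c_def using r by (simp add: field_simps)
      obtain W where W: "Re W < -1/2" "Re (W^2/(W+a)) \<ge> -1/2 - c"
        using case_ii_points[OF al0 al1 _ c0] ee00 unfolding ee_def by blast
      define z where "z = 1 + 1/W"
      have z: "z \<in> ball 0 1" and zW: "1/(z-1) = W" unfolding z_def using W_to_z[OF W(1)] by auto
      have u0: "\<phi> z - 1 \<noteq> 0" using phi_W(2)[OF al0 al1 _ z] ee0 unfolding ee_def phi by simp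
      have "\<phi> z \<in> ball (complex_of_real (1 - r) * 1) r" using sub z by blast
      then have "1 + (\<phi> z - 1) \<in> ball (complex_of_real (1 - r) * 1) r" by simp
      then have "Re (1/(\<phi> z - 1)) < -1/(2*r)" using disk_crit[OF u0 r(1)] by simp
      moreover have "Re (1/(\<phi> z - 1)) = Re (W^2/(W+a))" using mapsto(2)[OF al1 z] zW by simp
      moreover have "-1/(2*r) = -1/2 - c" unfolding c_def using r by (simp add: field_simps)
      ultimately show False using W(2) by simp
    qed
    obtain k where k: "k > 0" "\<And>W. Re W < -1/2 \<Longrightarrow> Re ((W^2/(W+a))^2/((W^2/(W+a))+a)) \<le> -1/2 - k"
      using case_ii_bound[OF al0 al1 _ b0] ee00 unfolding ee_def by blast
    define r where "r = 1/(1+k)"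
    have r: "0 < r" "r < 1" unfolding r_def using k by auto
    have sub: "(\<phi> \<circ> \<phi>) ` ball 0 1 \<subseteq> ball (complex_of_real (1 - r) * 1) r"
    proof clarify
      fix z :: complex assume z: "z \<in> ball 0 1"
      have W: "Re (1/(z-1)) < -1/2" using phi_W(1)[OF al0 al1 _ z] ee0 unfolding ee_def by simp
      have z': "\<phi> z \<in> ball 0 1" by (rule mapsto(1)[OF al1 z])
      have u0: "\<phi> (\<phi> z) - 1 \<noteq> 0" using phi_W(2)[OF al0 al1 _ z'] ee0 unfolding ee_def phi by simp
      define W' where "W' = (1/(z-1))^2 / (1/(z-1) + a)"
      have "Re (1/(\<phi> (\<phi> z) - 1)) = Re (W'^2 / (W' + a))"
        using mapsto(2)[OF al1 z'] mapsto(2)[OF al1 z] unfolding W'_def by simp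
      also have "\<dots> \<le> -1/2 - k" using k(2)[OF W] unfolding W'_def by simp
      also have "\<dots> < -1/(2*r)" unfolding r_def using k by (simp add: field_simps)
      finally have "1 + (\<phi> (\<phi> z) - 1) \<in> ball (complex_of_real (1 - r) * 1) r"
        using disk_crit[OF u0 r(1)] by simp
      then show "(\<phi> \<circ> \<phi>) z \<in> ball (complex_of_real (1 - r) * 1) r" by simp
    qed
    have contpp: "continuous_on UNIV (\<phi> \<circ> \<phi>)" using contphi by (metis continuous_on_compose subset_UNIV continuous_on_subset)
    have holpp: "(\<phi> \<circ> \<phi>) holomorphic_on UNIV" using holphi by (metis holomorphic_on_compose holomorphic_on_subset subset_UNIV)
    have im: "\<phi> ` ball 0 1 \<subseteq> cball 0 1" using mapsto(1)[OF al1] by fastforce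
    have clos: "\<phi> ` closure (ball 0 1) \<subseteq> cball 0 1"
      by (rule image_closure_subset[OF _ _ im]) (auto intro: continuous_on_subset[OF contphi])
    have "bdry_preimage (\<phi> \<circ> \<phi>) 1 = {1}"
    proof -
      have "\<gamma> = 1" if "norm \<gamma> = 1" "\<phi> (\<phi> \<gamma>) = 1" for \<gamma>
      proof -
        have "\<gamma> \<in> closure (ball 0 1)" using that(1) by simp
        then have "\<phi> \<gamma> \<in> cball 0 1" using clos by blast
        then have "\<phi> \<gamma> = 1" using preim[OF al1 _ that(2)] by simp
        then show ?thesis using preim[OF al1 _ ] that(1) by simp
      qed
      then show ?thesis unfolding bdry_cont[OF contpp] using phi1 by fastforce
    qed
    moreover have "(\<phi> \<circ> \<phi>) ` ball 0 1 \<subseteq> ball 0 1" using sub ball_sub[OF r] by blast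
    ultimately have "ELF_at (\<phi> \<circ> \<phi>) 1 1" unfolding ELF_at_def using holpp sub r deriv3_cont[OF holpp]
      by (auto intro!: exI[of _ r])
    then show "ess_lin_frac (\<phi> \<circ> \<phi>)" unfolding ess_lin_frac_def by blast
  qed
  have P3: "\<not> ess_lin_frac (\<phi> ^^ n)" if a2: "a = 1/2" and n: "n \<ge> 1" for n
  proof
    assume "ess_lin_frac (\<phi> ^^ n)"
    then obtain \<eta> \<zeta> where E: "ELF_at (\<phi> ^^ n) \<eta> \<zeta>" unfolding ess_lin_frac_def by blast
    then obtain r where r: "0 < r" "r < 1" and sub: "(\<phi> ^^ n) ` ball 0 1 \<subseteq> ball (complex_of_real (1 - r) * \<eta>) r"
      and eta: "norm \<eta> = 1" and bp: "bdry_preimage (\<phi> ^^ n) \<eta> = {\<zeta>}" unfolding ELF_at_def by blast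
    have cont: "continuous_on UNIV (\<phi> ^^ m)" for m
    proof (induction m)
      case 0 then show ?case by (simp add: continuous_on_id)
      case (Suc m) then show ?case using contphi
        by (simp add: continuous_on_compose2[of UNIV \<phi> UNIV "\<phi> ^^ m"])
    qed
    have one: "(\<phi> ^^ m) 1 = 1" for m by (induction m) (simp_all add: phi1)
    have mone: "(\<phi> ^^ n) (-1) = 1"
    proof -
      obtain m where m: "n = Suc m" using n by (cases n) auto
      have "\<phi> (-1) = 1" unfolding phi a2 by simp
      then show ?thesis unfolding m funpow_Suc_right using one by simp
    qed
    have "\<eta> = 1" by (rule tangent_eta[OF cont _ one eta r sub]) simp
    then have "bdry_preimage (\<phi> ^^ n) \<eta> \<supseteq> {1, -1}" unfolding bdry_cont[OF cont] using one mone by auto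
    then show False using bp by auto
  qed
  show ?thesis using P1 P2 P3 by blast
qed


end
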